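(* Suppose the event $E_{\tau,small}$ described in the context occurs. Let $\kappa_g>0$ be an upper bound for $\{\|g_k\|_2\}$. Then, with $\kappa_d>0$ as in the context, for any $k \geq \bar k_{\tau,\xi}$, \[ \mathbb{E}_k[\bar\alpha_k \bar\tau_k g_k^T (\bar d_k - d_k)] \leq \beta_k^2\, \theta\, \bar\tau_{\min}\, \kappa_g\, \kappa_d \sqrt{M}. \]
   Context: Problem: $\min_{x\in\mathbb{R}^n} f(x)$ s.t. $c(x)=0$, with $f(x)=\mathbb{E}[F(x,\omega)]$, $c:\mathbb{R}^n\to\mathbb{R}^m$ deterministic. Assumptions: there is an open convex set $\mathcal{X}$ containing all iterates and trial points; $f$ is continuously differentiable and bounded below over $\mathcal{X}$, $\nabla f$ is bounded and Lipschitz with constant $L$ over $\mathcal{X}$; $c$ and its Jacobian $J=\nabla c^T$ are bounded over $\mathcal{X}$, each $\nabla c_i$ is Lipschitz with constant $\gamma_i$, $\Gamma:=\sum_{i=1}^m\gamma_i$, and the singular values of $J$ are bounded away from zero over $\mathcal{X}$. The deterministic matrices $H_k\in\mathbb{S}^n$ satisfy $\|H_k\|_2\le\kappa_H$ and $u^TH_ku\ge\zeta\|u\|_2^2$ for all $u$ with $J_ku=0$. Notation: $g_k=\nabla f(x_k)$, $c_k=c(x_k)$, $J_k=\nabla c(x_k)^T$; $\bar g_k$ is a stochastic gradient estimate. Model reduction $\Delta q(x,\tau,g,H,d)=-\tau(g^Td+\tfrac12\max\{d^THd,0\})+\|c(x)\|_1$. Algorithm (stochastic SQP, inputs $\bar\tau_{-1},\bar\xi_{-1}>0$,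 $\epsilon,\sigma\in(0,1)$, $\{\beta_k\}\subset(0,1]$, $\theta\ge0$, Lipschitz constants $L,\Gamma$): at iteration $k$, solve $\begin{bmatrix}H_k & J_k^T\\ J_k & 0\end{bmatrix}\begin{bmatrix}\bar d_k\\ \bar y_k\end{bmatrix}=-\begin{bmatrix}\bar g_k\\ c_k\end{bmatrix}$. Set $\bar\tau_k^{trial}=\infty$ if $\bar g_k^T\bar d_k+\max\{\bar d_k^TH_k\bar d_k,0\}\le0$, else $(1-\sigma)\|c_k\|_1/(\bar g_k^T\bar d_k+\max\{\bar d_k^TH_k\bar d_k,0\})$; $\bar\tau_k=\bar\tau_{k-1}$ if $\bar\tau_{k-1}\le\bar\tau_k^{trial}$, else $(1-\epsilon)\bar\tau_k^{trial}$. Set $\bar\xi_k^{trial}=\Delta q(x_k,\bar\tau_k,\bar g_k,H_k,\bar d_k)/(\bar\tau_k\|\bar d_k\|_2^2)$, $\bar\xi_k=\bar\xi_{k-1}$ if $\bar\xi_{k-1}\le\bar\xi_k^{trial}$, else $(1-\epsilon)\bar\xi_k^{trial}$. The stepsize $\bar\alpha_k$ is chosen (by projecting candidate values $\beta_k\Delta q(x_k,\bar\tau_k,\bar g_k,H_k,\bar d_k)/((\bar\tau_kL+\Gamma)\|\bar d_k\|_2^2)$ and that value minus $4\|c_k\|_1/((\bar\tau_kL+\Gamma)\|\bar d_k\|_2^2)$, and selecting among them or $1$) so that it always lies in $[\bar\alpha_{k,\min},\bar\alpha_{k,\max}]=[\beta_k\bar\xi_k\bar\tau_k/(\bar\tau_kL+\Gamma),\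 \beta_k\bar\xi_k\bar\tau_k/(\bar\tau_kL+\Gamma)+\theta\beta_k^2]$; $x_{k+1}=x_k+\bar\alpha_k\bar d_k$. The deterministic direction $d_k$ solves the same linear system with $g_k$ in place of $\bar g_k$, and $\tau_k^{trial}$ is the trial formula with $(g_k,d_k)$. Event $E_{\tau,small}$: there exist $\bar k_{\tau,\xi}\in\mathbb{N}$, $\bar\tau_{\min}>0$ with $\bar\tau_k=\bar\tau_{\min}\le\tau_k^{trial}$ and $\bar\xi_k=\bar\xi_{\min}$ for all $k\ge\bar k_{\tau,\xi}$; and $\mathbb{E}_k$ denotes expectation conditioned on this event and on the algorithm reaching $x_k$, with $\mathbb{E}_k[\bar g_k]=g_k$, $\mathbb{E}_k[\|\bar g_k-g_k\|_2^2]\le M$. $\kappa_d>0$ is an upper bound (independent of $k$) on the norm of the inverse of $\begin{bmatrix}H_k & J_k^T\\ J_k & 0\end{bmatrix}$, giving $\mathbb{E}_k[\|\bar d_k-d_k\|_2]\le\kappa_d\sqrt M$. *)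

theory Defs
  imports "HOL-Analysis.Analysis" "HOL-Probability.Probability"
begin

definition norm1 :: "real ^ 'm \<Rightarrow> real" where
  "norm1 v = (\<Sum>i\<in>UNIV. \<bar>v $ i\<bar>)"

definition model_red :: "real ^ 'm \<Rightarrow> real \<Rightarrow> real ^ 'n \<Rightarrow> real ^ 'n ^ 'n \<Rightarrow> real ^ 'n \<Rightarrow> real" where
  "model_red c tau g H d = - tau * (g \<bullet> d + (1/2) * max (d \<bullet> (H *v d)) 0) + norm1 c"

definition tau_trial :: "real \<Rightarrow> real ^ 'm \<Rightarrow> real ^ 'n \<Rightarrow> real ^ 'n ^ 'n \<Rightarrow> real ^ 'n \<Rightarrow> ereal" where
  "tau_trial sgm c g H d =
     (if g \<bullet> d + max (d \<bullet> (H *v d)) 0 \<le> 0 then \<infinity>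
      else ereal ((1 - sgm) * norm1 c / (g \<bullet> d + max (d \<bullet> (H *v d)) 0)))"

end

theory Submission
  imports Defs
begin

theorem lemma3p10:
  fixes M :: "'w measure"
    and H :: "real ^ 'n ^ 'n" and J :: "real ^ 'n ^ 'm" and c :: "real ^ 'm"
    and g d :: "real ^ 'n" and y :: "real ^ 'm"
    and gbar dbar :: "'w \<Rightarrow> real ^ 'n" and ybar :: "'w \<Rightarrow> real ^ 'm"
    and alpha :: "'w \<Rightarrow> real"
    and L Gamma sgm epsilon beta theta tau_min xi_min kappa_H zeta kappa_g kappa_d Mv :: real
  assumes prob: "prob_space M"
    and gbar_meas: "gbar \<in> borel_measurable M"
    and gbar_int: "integrable M gbar"
    and gbar_unbiased: "(\<integral>\<omega>. gbar \<omega> \<partial>M) = g"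
    and var_int: "integrable M (\<lambda>\<omega>. (norm (gbar \<omega> - g))\<^sup>2)"
    and var_bound: "(\<integral>\<omega>. (norm (gbar \<omega> - g))\<^sup>2 \<partial>M) \<le> Mv"
    and H_sym: "transpose H = H"
    and H_bound: "\<forall>u. norm (H *v u) \<le> kappa_H * norm u"
    and H_curv: "zeta > 0" "\<forall>u. J *v u = 0 \<longrightarrow> zeta * (norm u)\<^sup>2 \<le> u \<bullet> (H *v u)"
    and kkt_inv: "kappa_d > 0"
      "\<forall>u v. norm (u, v) \<le> kappa_d * norm (H *v u + transpose J *v v, J *v u)"
    and dbar_sys: "\<forall>\<omega>. H *v dbar \<omega> + transpose J *v ybar \<omega> = - gbar \<omega> \<and> J *v dbar \<omega> = - c"
    and dbar_meas: "dbar \<in> borel_measurable M"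
    and d_sys: "H *v d + transpose J *v y = - g" "J *v d = - c"
    and params: "L > 0" "Gamma \<ge> 0" "0 < sgm" "sgm < 1" "0 < epsilon" "epsilon < 1"
      "0 < beta" "beta \<le> 1" "theta \<ge> 0"
    and event: "tau_min > 0" "xi_min > 0" "ereal tau_min \<le> tau_trial sgm c g H d"
    and kappa_g: "kappa_g > 0" "norm g \<le> kappa_g"
    and alpha_meas: "alpha \<in> borel_measurable M"
    and alpha_range: "\<forall>\<omega>. beta * xi_min * tau_min / (tau_min * L + Gamma) \<le> alpha \<omega> \<and>
        alpha \<omega> \<le> beta * xi_min * tau_min / (tau_min * L + Gamma) + theta * beta\<^sup>2"
  shows "(\<integral>\<omega>. alpha \<omega> * tau_min * (g \<bullet> (dbar \<omega> - d)) \<partial>M)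
           \<le> beta\<^sup>2 * theta * tau_min * kappa_g * kappa_d * sqrt Mv"
proof -
  interpret P: prob_space M by (rule prob)
  define K where "K = (\<lambda>p::((real^'n) \<times> (real^'m)). (H *v fst p + transpose J *v snd p, J *v fst p))"
  have linK: "linear K"
    unfolding K_def linear_iff by (auto simp: algebra_simps)
  have Kbound: "norm p \<le> kappa_d * norm (K p)" for p
    using kkt_inv(2)[rule_format, of "fst p" "snd p"] by (simp add: K_def)
  have injK: "inj K"
  proof (rule injI)
    fix a b assume "K a = K b"
    then have "K (a - b) = 0" using linear_diff[OF linK] by simp
    then have "norm (a - b) \<le> 0" using Kbound[of "a - b"] by simp
    then show "a = b" by simp
  qed
  obtain Ki where Ki: "linear Ki" "Ki \<circ> K = id"
    using linear_injective_left_inverse[OF linK injK] by blast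
  define T where "T = (\<lambda>w. g \<bullet> fst (Ki (w, 0)))"
  have linT: "linear T"
  proof -
    have a: "Ki (a + b, 0) = Ki (a, 0) + Ki (b, 0)" for a b
      using linear_add[OF Ki(1), of "(a,0)" "(b,0)"] by simp
    have m: "Ki (r *\<^sub>R a, 0) = r *\<^sub>R Ki (a, 0)" for r a
      using linear_scale[OF Ki(1), of r "(a,0)"] by simp
    show ?thesis unfolding T_def linear_iff
      by (auto simp: a m inner_add_right)
  qed
  have blT: "bounded_linear T" using linT linear_conv_bounded_linear by blast
  have dd: "dbar w - d = - fst (Ki (gbar w - g, 0))" for w
  proof -
    have "K (d - dbar w, y - ybar w) = (gbar w - g, 0)"
      using dbar_sys[rule_format, of w] d_sys unfolding K_def
      by (simp add: matrix_vector_mult_diff_distrib algebra_simps)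
    then have "Ki (K (d - dbar w, y - ybar w)) = Ki (gbar w - g, 0)" by simp
    then have "(d - dbar w, y - ybar w) = Ki (gbar w - g, 0)"
      using Ki(2) by (metis comp_apply id_apply)
    then show ?thesis by (metis fst_conv minus_diff_eq)
  qed
  define F where "F = (\<lambda>w. g \<bullet> (dbar w - d))"
  have FT: "F w = - T (gbar w - g)" for w
    unfolding F_def T_def dd by simp
  have intD: "integrable M (\<lambda>w. gbar w - g)"
    using gbar_int by simp
  have intD0: "(\<integral>w. gbar w - g \<partial>M) = 0"
    using gbar_int gbar_unbiased by (simp add: P.prob_space)
  have intF: "integrable M F"
    unfolding FT using integrable_bounded_linear[OF blT intD] by simp
  have intF0: "(\<integral>w. F w \<partial>M) = 0"
    unfolding FT using integral_bounded_linear[OF blT intD] intD0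
    linear_0[OF linT] by (simp add: o_def)
  define N where "N = (\<lambda>w. norm (gbar w - g))"
  have Fb: "\<bar>F w\<bar> \<le> kappa_g * kappa_d * N w" for w
  proof -
    have "K (dbar w - d, ybar w - y) = (- (gbar w - g), 0)"
      using dbar_sys[rule_format, of w] d_sys unfolding K_def
      by (simp add: matrix_vector_mult_diff_distrib algebra_simps)
    then have "norm (dbar w - d, ybar w - y) \<le> kappa_d * N w"
      using Kbound[of "(dbar w - d, ybar w - y)"] unfolding N_def
      by (simp add: norm_Pair norm_minus_commute)
    then have n: "norm (dbar w - d) \<le> kappa_d * N w"
      using norm_fst_le[of "dbar w - d" "ybar w - y"] by linarith
    have "\<bar>F w\<bar> \<le> norm g * norm (dbar w - d)"
      unfolding F_def by (rule Cauchy_Schwarz_ineq2)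
    also have "\<dots> \<le> kappa_g * (kappa_d * N w)"
      using n kappa_g by (intro mult_mono) (auto simp: N_def)
    finally show ?thesis by simp
  qed
  have intN: "integrable M N" unfolding N_def using intD by simp
  have intN2: "integrable M (\<lambda>w. (N w)\<^sup>2)" unfolding N_def using var_int by simp
  define m where "m = (\<integral>w. N w \<partial>M)"
  have m0: "m \<ge> 0" unfolding m_def N_def by simp
  have "0 \<le> (\<integral>w. (N w - m)\<^sup>2 \<partial>M)" by simp
  also have "(\<integral>w. (N w - m)\<^sup>2 \<partial>M) = (\<integral>w. (N w)\<^sup>2 - 2 * m * N w + m\<^sup>2 \<partial>M)"
    by (simp add: power2_eq_square algebra_simps)
  also have "\<dots> = (\<integral>w. (N w)\<^sup>2 \<partial>M) - 2 * m * m + m\<^sup>2"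
    using intN intN2 by (simp add: m_def P.prob_space)
  finally have "m\<^sup>2 \<le> (\<integral>w. (N w)\<^sup>2 \<partial>M)" by (simp add: power2_eq_square)
  also have "\<dots> \<le> Mv" using var_bound unfolding N_def by simp
  finally have mM: "m \<le> sqrt Mv" using m0 real_le_rsqrt by blast
  define A where "A = beta * xi_min * tau_min / (tau_min * L + Gamma)"
  define e where "e = theta * beta\<^sup>2"
  have e0: "e \<ge> 0" unfolding e_def using params by simp
  have Fmeas: "F \<in> borel_measurable M" using intF by auto
  have int1: "integrable M (\<lambda>w. (alpha w - A) * tau_min * F w)"
  proof (rule Bochner_Integration.integrable_bound[of _ "\<lambda>w. e * tau_min * (kappa_g * kappa_d * N w)"])
    show "integrable M (\<lambda>w. e * tau_min * (kappa_g * kappa_d * N w))"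
      using intN by simp
    show "(\<lambda>w. (alpha w - A) * tau_min * F w) \<in> borel_measurable M"
      using alpha_meas Fmeas by measurable
    show "AE w in M. norm ((alpha w - A) * tau_min * F w) \<le> norm (e * tau_min * (kappa_g * kappa_d * N w))"
    proof (rule AE_I2)
      fix w
      have a: "\<bar>alpha w - A\<bar> \<le> e" using alpha_range[rule_format, of w] unfolding A_def e_def by (simp add: abs_le_iff)
      have "norm ((alpha w - A) * tau_min * F w) = \<bar>alpha w - A\<bar> * tau_min * \<bar>F w\<bar>"
        using event by (simp add: abs_mult)
      also have "\<dots> \<le> e * tau_min * (kappa_g * kappa_d * N w)"
        using a Fb[of w] event e0 by (intro mult_mono) auto
      also have "\<dots> = norm (e * tau_min * (kappa_g * kappa_d * N w))"
        using e0 event kappa_g kkt_inv by (simp add: N_def abs_mult)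
      finally show "norm ((alpha w - A) * tau_min * F w) \<le> norm (e * tau_min * (kappa_g * kappa_d * N w))" .
    qed
  qed
  have eqA: "(\<lambda>w. alpha w * tau_min * F w) = (\<lambda>w. (alpha w - A) * tau_min * F w + (A * tau_min) * F w)"
    by (auto simp: algebra_simps)
  have "(\<integral>w. alpha w * tau_min * F w \<partial>M) = (\<integral>w. (alpha w - A) * tau_min * F w \<partial>M)"
    unfolding eqA using int1 intF intF0 by simp
  also have "\<dots> \<le> (\<integral>w. e * tau_min * (kappa_g * kappa_d * N w) \<partial>M)"
  proof (rule integral_mono[OF int1])
    show "integrable M (\<lambda>w. e * tau_min * (kappa_g * kappa_d * N w))" using intN by simp
    fix w
    have a: "alpha w - A \<le> e" "alpha w - A \<ge> 0" using alpha_range[rule_format, of w] unfolding A_def e_def by linarith+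
    have "(alpha w - A) * tau_min * F w \<le> (alpha w - A) * tau_min * \<bar>F w\<bar>"
      using a event by (intro mult_left_mono) auto
    also have "\<dots> \<le> e * tau_min * (kappa_g * kappa_d * N w)"
      using a Fb[of w] event e0 by (intro mult_mono) auto
    finally show "(alpha w - A) * tau_min * F w \<le> e * tau_min * (kappa_g * kappa_d * N w)" .
  qed
  also have "\<dots> = e * tau_min * kappa_g * kappa_d * m" unfolding m_def by simp
  also have "\<dots> \<le> e * tau_min * kappa_g * kappa_d * sqrt Mv"
    using mM e0 event kappa_g kkt_inv by (intro mult_left_mono) auto
  finally show ?thesis unfolding F_def e_def by (simp add: algebra_simps)
qed

end
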